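(* Let $d\ge 2$ and $k=d+1$. For $x_1,\ldots,x_{d+1}\in\mathbb R^d$ let $A(x_1,\ldots,x_{d+1})$ be the $d$-dimensional volume of the simplex with vertices $x_1,\ldots,x_{d+1}$. Then the maximizers of $I_{A^2}(\mu)=\int\cdots\int A^2(x_1,\ldots,x_{d+1})\,d\mu(x_1)\cdots d\mu(x_{d+1})$ over $\mu\in\mathcal P^*(\mathbb R^d)$ are exactly the balanced isotropic probability measures on $\mathbb R^d$.
   Context: $\mathcal P^*(\mathbb R^d)$ is the set of Borel probability measures $\mu$ on $\mathbb R^d$ with $\int\|x\|^2\,d\mu(x)=1$. A measure $\mu$ on $\mathbb R^d$ is isotropic if $\int x x^T\,d\mu(x)=\frac1d I_d$, and balanced if $\int x\,d\mu(x)=0$. *)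

theory Defs
  imports "HOL-Analysis.Analysis" "HOL-Probability.Probability"
begin

definition P_star :: "(real^'n) measure set" where
  "P_star = {\<mu>. prob_space \<mu> \<and> sets \<mu> = sets borel \<and>
                (\<integral>\<^sup>+ x. ennreal ((norm x)^2) \<partial>\<mu>) = 1}"

definition isotropic :: "(real^'n) measure \<Rightarrow> bool" where
  "isotropic \<mu> \<longleftrightarrow> (\<forall>i j. integrable \<mu> (\<lambda>x. x$i * x$j) \<and>
      (\<integral>x. x$i * x$j \<partial>\<mu>) = (if i = j then 1 / real CARD('n) else 0))"

definition balanced :: "(real^'n) measure \<Rightarrow> bool" where
  "balanced \<mu> \<longleftrightarrow> integrable \<mu> (\<lambda>x. x) \<and> (\<integral>x. x \<partial>\<mu>) = 0"

definition simplex_vol :: "(nat \<Rightarrow> real^'n) \<Rightarrow> real" where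
  "simplex_vol x = measure lborel (convex hull (x ` {..CARD('n)}))"

definition I_A2 :: "(real^'n) measure \<Rightarrow> ennreal" where
  "I_A2 \<mu> = (\<integral>\<^sup>+ x. ennreal ((simplex_vol x)^2) \<partial>(PiM {..CARD('n)} (\<lambda>_. \<mu>)))"

end

theory Submission
  imports Defs
begin

lemma det_shear_one:
  fixes m n :: "'n::finite"
  assumes "m \<noteq> n"
  shows "det (matrix (\<lambda>v::real^'n. \<chi> i. if i = m then v $ m + v $ n else v $ i)) = 1"
proof -
  have "matrix (\<lambda>v::real^'n. \<chi> i. if i = m then v $ m + v $ n else v $ i)
     = (\<chi> k. if k = m then row m (mat 1) + 1 *s row n (mat 1) else row k (mat 1))"
    by (auto simp: matrix_def vec_eq_iff row_def mat_def axis_def)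
  then show ?thesis using det_row_operation[OF assms, where c=1 and A="mat 1 :: real^'n^'n"] by simp
qed

proposition
  fixes f :: "real^'n \<Rightarrow> real^'n"
  assumes "linear f" "S \<in> lmeasurable"
  shows measurable_linear_image_fin: "(f ` S) \<in> lmeasurable"
    and measure_linear_image_fin: "measure lebesgue (f ` S) = \<bar>det (matrix f)\<bar> * measure lebesgue S" (is "?Q f S")
proof -
  have "\<forall>S \<in> lmeasurable. (f ` S) \<in> lmeasurable \<and> ?Q f S"
  proof (rule induct_linear_elementary [OF \<open>linear f\<close>]; intro ballI)
    fix f g and S :: "(real,'n) vec set"
    assume "linear f" and "linear g"
      and f [rule_format]: "\<forall>S \<in> lmeasurable. f ` S \<in> lmeasurable \<and> ?Q f S"
      and g [rule_format]: "\<forall>S \<in> lmeasurable. g ` S \<in> lmeasurable \<and> ?Q g S"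
      and S: "S \<in> lmeasurable"
    then have gS: "g ` S \<in> lmeasurable"
      by blast
    show "(f \<circ> g) ` S \<in> lmeasurable \<and> ?Q (f \<circ> g) S"
      using f [OF gS] g [OF S] matrix_compose [OF \<open>linear g\<close> \<open>linear f\<close>]
      by (simp add: o_def image_comp abs_mult det_mul)
  next
    fix f :: "real^'n \<Rightarrow> real^'n" and i and S :: "(real^'n) set"
    assume "linear f" and 0: "\<And>x. f x $ i = 0" and "S \<in> lmeasurable"
    then have "\<not> inj f"
      by (metis (full_types) linear_injective_imp_surjective one_neq_zero surjE vec_component)
    have detf: "det (matrix f) = 0"
      using \<open>\<not> inj f\<close> det_nz_iff_inj[OF \<open>linear f\<close>] by blast
    show "f ` S \<in> lmeasurable \<and> ?Q f S"
    proof
      show "f ` S \<in> lmeasurable"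
        using lmeasurable_iff_indicator_has_integral \<open>linear f\<close> \<open>\<not> inj f\<close> negligible_UNIV negligible_linear_singular_image by blast
      have "measure lebesgue (f ` S) = 0"
        by (meson \<open>\<not> inj f\<close> \<open>linear f\<close> negligible_imp_measure0 negligible_linear_singular_image)
      also have "\<dots> = \<bar>det (matrix f)\<bar> * measure lebesgue S"
        by (simp add: detf)
      finally show "?Q f S" .
    qed
  next
    fix c and S :: "(real^'n) set"
    assume "S \<in> lmeasurable"
    show "(\<lambda>a. \<chi> i. c i * a $ i) ` S \<in> lmeasurable \<and> ?Q (\<lambda>a. \<chi> i. c i * a $ i) S"
    proof
      show "(\<lambda>a. \<chi> i. c i * a $ i) ` S \<in> lmeasurable"
        by (simp add: \<open>S \<in> lmeasurable\<close> measurable_stretch)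
      show "?Q (\<lambda>a. \<chi> i. c i * a $ i) S"
        by (simp add: measure_stretch [OF \<open>S \<in> lmeasurable\<close>, of c] axis_def matrix_def det_diagonal)
    qed
  next
    fix m :: "'n" and n :: "'n" and S :: "(real, 'n) vec set"
    assume "m \<noteq> n" and "S \<in> lmeasurable"
    let ?h = "\<lambda>v::(real, 'n) vec. \<chi> i. v $ Transposition.transpose m n i"
    have lin: "linear ?h"
      by (rule linearI) (simp_all add: plus_vec_def scaleR_vec_def)
    have meq: "measure lebesgue ((\<lambda>v::(real, 'n) vec. \<chi> i. v $ Transposition.transpose m n i) ` cbox a b)
             = measure lebesgue (cbox a b)" for a b
    proof (cases "cbox a b = {}")
      case True then show ?thesis
        by simp
    next
      case False
      then have him: "?h ` (cbox a b) \<noteq> {}"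
        by blast
      have eq: "?h ` (cbox a b) = cbox (?h a) (?h b)"
        by (auto simp: image_iff lambda_swap_Galois mem_box_cart) (metis transpose_involutory)+
      show ?thesis
        using him prod.permute [OF permutes_swap_id, where S=UNIV and g="\<lambda>i. (b - a)$i", symmetric]
        by (simp add: eq content_cbox_cart False)
    qed
    have "(\<chi> i j. if Transposition.transpose m n i = j then 1 else 0) = (\<chi> i j. if j = Transposition.transpose m n i then 1 else (0::real))"
      by (auto intro!: Cart_lambda_cong)
    then have "matrix ?h = transpose(\<chi> i j. mat 1 $ i $ Transposition.transpose m n j)"
      by (auto simp: matrix_eq transpose_def axis_def mat_def matrix_def)
    then have 1: "\<bar>det (matrix ?h)\<bar> = 1"
      by (simp add: det_permute_columns permutes_swap_id sign_swap_id abs_mult)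
    show "?h ` S \<in> lmeasurable \<and> ?Q ?h S"
      using measure_linear_sufficient [OF lin \<open>S \<in> lmeasurable\<close>] meq 1 by force
  next
    fix m n :: "'n" and S :: "(real, 'n) vec set"
    assume "m \<noteq> n" and "S \<in> lmeasurable"
    let ?h = "\<lambda>v::(real, 'n) vec. \<chi> i. if i = m then v $ m + v $ n else v $ i"
    have lin: "linear ?h"
      by (rule linearI) (auto simp: algebra_simps plus_vec_def scaleR_vec_def vec_eq_iff)
    have 1: "det(matrix ?h) = 1"
      using det_shear_one[OF \<open>m \<noteq> n\<close>] .
    have meq: "measure lebesgue (?h ` (cbox a b)) = measure lebesgue (cbox a b)" for a b
    proof (cases "cbox a b = {}")
      case True then show ?thesis by simp
    next
      case False
      then have ne: "(+) (\<chi> i. if i = n then - a $ n else 0) ` cbox a b \<noteq> {}"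
        by auto
      let ?v = "\<chi> i. if i = n then - a $ n else 0"
      have "?h ` cbox a b
            = (+) (\<chi> i. if i = m \<or> i = n then a $ n else 0) ` ?h ` (+) ?v ` (cbox a b)"
        using \<open>m \<noteq> n\<close> unfolding image_comp o_def by (force simp: vec_eq_iff)
      then have "measure lebesgue (?h ` (cbox a b))
               = measure lebesgue ((\<lambda>v. \<chi> i. if i = m then v $ m + v $ n else v $ i) `
                                   (+) ?v ` cbox a b)"
        by (rule ssubst) (rule measure_translation)
      also have "\<dots> = measure lebesgue ((\<lambda>v. \<chi> i. if i = m then v $ m + v $ n else v $ i) ` cbox (?v +a) (?v + b))"
        by (metis (no_types, lifting) cbox_translation)
      also have "\<dots> = measure lebesgue ((+) ?v ` cbox a b)"
        apply (subst measure_shear_interval)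
        using \<open>m \<noteq> n\<close> ne apply auto
        apply (simp add: cbox_translation)
        by (metis cbox_borel cbox_translation measure_completion sets_lborel)
      also have "\<dots> = measure lebesgue (cbox a b)"
        by (rule measure_translation)
        finally show ?thesis .
      qed
    show "?h ` S \<in> lmeasurable \<and> ?Q ?h S"
      using measure_linear_sufficient [OF lin \<open>S \<in> lmeasurable\<close>] meq 1 by force
  qed
  with assms show "(f ` S) \<in> lmeasurable" "?Q f S"
    by metis+
qed

lemma simplex_vol_det:
  fixes x :: "nat \<Rightarrow> real^'n" and e :: "'n \<Rightarrow> nat"
  assumes e: "bij_betw e UNIV {1..CARD('n)}"
  shows "simplex_vol x = \<bar>det (\<chi> i j. x (e j) $ i - x 0 $ i)\<bar> / fact CARD('n)"
proof -
  define M where "M = (\<chi> i j. x (e j) $ i - x 0 $ i)"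
  define g where "g = (\<lambda>v. M *v v)"
  define X where "X = x ` {..CARD('n)}"
  have fX: "finite X" by (simp add: X_def)
  have [simp]: "M *v axis i 1 = x (e i) - x 0" for i :: 'n
    by (simp add: M_def matrix_vector_mult_basis column_def vec_eq_iff)
  define std where "std = (convex hull insert 0 Basis :: (real ^ 'n) set)"
  have compact: "compact std" unfolding std_def
    by (intro finite_imp_compact_convex_hull) auto
  have cX: "compact (convex hull X)" using fX by (rule finite_imp_compact_convex_hull)
  have "simplex_vol x = measure lborel (convex hull X)" by (simp add: simplex_vol_def X_def)
  also have "\<dots> = measure lebesgue (convex hull X)"
    using cX by (intro measure_completion[symmetric]) (auto dest: compact_imp_closed)
  also have "\<dots> = measure lebesgue (((+) (-x 0)) ` (convex hull X))"
    by (rule measure_translation [symmetric])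
  also have "((+) (-x 0)) ` (convex hull X) = convex hull (((+) (-x 0)) ` X)"
    by (rule convex_hull_translation [symmetric])
  also have "((+) (-x 0)) ` X = insert 0 ((\<lambda>k. x k - x 0) ` {1..CARD('n)})"
  proof -
    have "{..CARD('n)} = insert 0 {1..CARD('n)}" by auto
    then show ?thesis by (auto simp: X_def image_iff)
  qed
  also have "(\<lambda>k. x k - x 0) ` {1..CARD('n)} = g ` Basis"
  proof -
    have "(\<lambda>k. x k - x 0) ` {1..CARD('n)} = (\<lambda>k. x k - x 0) ` (e ` UNIV)"
      using e by (simp add: bij_betw_def)
    also have "\<dots> = g ` Basis"
      by (auto simp: g_def Basis_vec_def image_iff)
    finally show ?thesis .
  qed
  also have "insert 0 (g ` Basis) = g ` insert 0 Basis"
    by (auto simp: g_def)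
  also have "convex hull (g ` insert 0 Basis) = g ` std" unfolding std_def
    by (rule convex_hull_linear_image [symmetric]) (auto simp: g_def)
  also have "measure lebesgue (g ` std) = \<bar>det (matrix g)\<bar> * measure lebesgue std"
    by (rule measure_linear_image_fin) (auto simp: g_def compact intro: lmeasurable_compact)
  also have "matrix g = M" by (simp add: g_def)
  also have "measure lebesgue std = measure lborel std" using compact
    by (intro measure_completion) (auto dest: compact_imp_closed)
  also have "measure lborel std = 1 / fact CARD('n)" unfolding std_def
    by (simp add: content_std_simplex)
  finally show ?thesis by (simp add: M_def)
qed

lemma sign_map_option:
  assumes "q permutes (UNIV::'n::finite set)"
  shows "sign (map_option q) = sign q"
proof -
  have "map_permutation UNIV Some q = map_option q"
  proof (rule ext)
    fix x :: "'n option"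
    show "map_permutation UNIV Some q x = map_option q x"
    proof (cases x)
      case None
      then have "x \<notin> Some ` UNIV" by auto
      then show ?thesis using None by (simp add: map_permutation_def restrict_id_def)
    next
      case (Some a)
      then show ?thesis by (simp add: map_permutation_apply)
    qed
  qed
  moreover have "sign (map_permutation UNIV Some q) = sign q"
    by (rule sign_map_permutation) (use assms in auto)
  ultimately show ?thesis by simp
qed

lemma permutes_map_option:
  assumes "q permutes (UNIV::'n::finite set)"
  shows "map_option q permutes (UNIV::'n option set)"
proof -
  have "bij q" using assms by (simp add: permutes_bij)
  then have "inj (map_option q)"
    by (simp add: bij_is_inj option.inj_map)
  then have "bij (map_option q)"
    using finite_UNIV_inj_surj[of "map_option q"] by (simp add: bij_def)
  then show ?thesis by (simp add: permutes_univ bij_iff)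
qed

lemma det_bordered:
  fixes A :: "'a::comm_ring_1^'n::finite option^'n option"
  assumes row: "\<And>j. A $ None $ j = (if j = None then 1 else 0)"
  shows "det A = det (\<chi> i j. A $ Some i $ Some j)"
proof -
  let ?t = "\<lambda>p. of_int (sign p) * (\<Prod>i\<in>UNIV. A $ i $ p i)"
  let ?P = "{p. p permutes (UNIV::'n option set)}"
  let ?Pz = "{p. p permutes (UNIV::'n option set) \<and> p None = None}"
  have UO: "(UNIV::'n option set) = insert None (Some ` UNIV)"
    by (auto simp: UNIV_option_conv)
  have prodUO: "(\<Prod>i\<in>UNIV. f i) = f None * (\<Prod>i\<in>UNIV. f (Some i))" for f :: "'n option \<Rightarrow> 'a"
    by (subst UO) (auto simp: prod.reindex)
  have "det A = sum ?t ?P" unfolding det_def ..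
  also have "\<dots> = sum ?t ?Pz"
  proof -
    have z: "\<forall>p\<in>?P - ?Pz. ?t p = 0"
    proof
      fix p assume "p \<in> ?P - ?Pz"
      then have "p None \<noteq> None" by auto
      then have "A $ None $ p None = 0" by (simp add: row)
      then show "?t p = 0" by (subst prodUO) simp
    qed
    show ?thesis
      apply (rule sum.mono_neutral_right)
      subgoal by (simp add: finite_permutations)
      subgoal by blast
      using z by blast
  qed
  also have "\<dots> = (\<Sum>q | q permutes (UNIV::'n set). ?t (map_option q))"
  proof (rule sum.reindex_bij_witness[of _ map_option "\<lambda>p i. the (p (Some i))"])
    fix p assume p: "p \<in> ?Pz"
    then have bp: "bij p" using permutes_bij by blast
    have ps: "p (Some i) \<noteq> None" for i
    proof
      assume "p (Some i) = None"
      with p have "p (Some i) = p None" by simp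
      with bp show False by (metis bij_pointE option.distinct(1))
    qed
    show mo: "map_option (\<lambda>i. the (p (Some i))) = p"
    proof
      fix x show "map_option (\<lambda>i. the (p (Some i))) x = p x"
        using p ps by (cases x) auto
    qed
    have "inj (\<lambda>i. the (p (Some i)))"
    proof (rule injI)
      fix a b assume "the (p (Some a)) = the (p (Some b))"
      then have "p (Some a) = p (Some b)" using ps by (metis option.expand option.sel)
      then show "a = b" using bp by (metis bij_pointE option.inject)
    qed
    then have "bij (\<lambda>i. the (p (Some i)))"
      using finite_UNIV_inj_surj[of "\<lambda>i. the (p (Some i))"] by (simp add: bij_def)
    then show "(\<lambda>i. the (p (Some i))) \<in> {q. q permutes UNIV}"
      by (simp add: permutes_univ bij_iff)
    show "?t (map_option (\<lambda>i. the (p (Some i)))) = ?t p" by (simp only: mo)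
  next
    fix q assume "q \<in> {q. q permutes (UNIV::'n set)}"
    then show "map_option q \<in> ?Pz" "(\<lambda>i. the (map_option q (Some i))) = q"
      by (auto simp: permutes_map_option)
  qed
  also have "\<dots> = (\<Sum>q | q permutes (UNIV::'n set). of_int (sign q) * (\<Prod>i\<in>UNIV. (\<chi> i j. A $ Some i $ Some j) $ i $ q i))"
    by (intro sum.cong refl) (auto simp: sign_map_option prodUO row)
  also have "\<dots> = det (\<chi> i j. A $ Some i $ Some j)" by (simp add: det_def)
  finally show ?thesis .
qed

lemma perm_inner_sum:
  fixes S :: "'a::comm_ring_1^'m::finite^'m"
  assumes p: "p permutes (UNIV::'m set)"
  shows "(\<Sum>q | q permutes (UNIV::'m set). of_int (sign q) * (\<Prod>j\<in>UNIV. S$(p j)$(q j))) = of_int (sign p) * det S"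
proof -
  have ip: "inv p permutes UNIV" using p by (rule permutes_inv)
  have pr: "(\<Prod>j\<in>UNIV. S$(p j)$(q j)) = (\<Prod>i\<in>UNIV. S$i$((q \<circ> inv p) i))" for q
  proof -
    have "(\<Prod>i\<in>UNIV. S$i$((q \<circ> inv p) i)) = (\<Prod>j\<in>UNIV. S$(p j)$((q \<circ> inv p) (p j)))"
      using prod.reindex_bij_betw[OF permutes_imp_bij[OF p], of "\<lambda>i. S$i$((q \<circ> inv p) i)"] by simp
    also have "\<dots> = (\<Prod>j\<in>UNIV. S$(p j)$(q j))"
      using permutes_inverses(2)[OF p] by simp
    finally show ?thesis by simp
  qed
  have "det S = (\<Sum>r | r permutes (UNIV::'m set). of_int (sign r) * (\<Prod>i\<in>UNIV. S$i$(r i)))"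
    unfolding det_def ..
  also have "\<dots> = (\<Sum>q | q permutes (UNIV::'m set). of_int (sign (q \<circ> inv p)) * (\<Prod>i\<in>UNIV. S$i$((q \<circ> inv p) i)))"
    by (rule sum_permutations_compose_right[OF ip])
  also have "\<dots> = (\<Sum>q | q permutes (UNIV::'m set). of_int (sign p) * (of_int (sign q) * (\<Prod>j\<in>UNIV. S$(p j)$(q j))))"
  proof (rule sum.cong[OF refl])
    fix q assume "q \<in> {q. q permutes (UNIV::'m set)}"
    then have q: "q permutes UNIV" by simp
    have "sign (q \<circ> inv p) = sign q * sign p"
      using sign_compose[OF permutes_imp_permutation[OF finite_class.finite_UNIV q] permutes_imp_permutation[OF finite_class.finite_UNIV ip]]
        sign_inverse[OF permutes_imp_permutation[OF finite_class.finite_UNIV p]] by simp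
    then show "of_int (sign (q \<circ> inv p)) * (\<Prod>i\<in>UNIV. S$i$((q \<circ> inv p) i)) = of_int (sign p) * (of_int (sign q) * (\<Prod>j\<in>UNIV. S$(p j)$(q j)))"
      by (simp add: pr)
  qed
  also have "\<dots> = of_int (sign p) * (\<Sum>q | q permutes (UNIV::'m set). of_int (sign q) * (\<Prod>j\<in>UNIV. S$(p j)$(q j)))"
    by (simp add: sum_distrib_left)
  finally have "of_int (sign p) * det S = of_int (sign p) * of_int (sign p) * (\<Sum>q | q permutes (UNIV::'m set). of_int (sign q) * (\<Prod>j\<in>UNIV. S$(p j)$(q j)))"
    by (simp add: mult.assoc)
  also have "of_int (sign p) * of_int (sign p) = (1::'a)"
    by (metis of_int_1 of_int_mult sign_idempotent)
  finally show ?thesis by simp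
qed

lemma perm_double_sum:
  fixes S :: "'a::comm_ring_1^'m::finite^'m"
  shows "(\<Sum>p | p permutes (UNIV::'m set). \<Sum>q | q permutes (UNIV::'m set).
            of_int (sign p) * of_int (sign q) * (\<Prod>j\<in>UNIV. S$(p j)$(q j))) = of_nat (fact CARD('m)) * det S"
proof -
  have "(\<Sum>p | p permutes (UNIV::'m set). \<Sum>q | q permutes (UNIV::'m set).
            of_int (sign p) * of_int (sign q) * (\<Prod>j\<in>UNIV. S$(p j)$(q j)))
      = (\<Sum>p | p permutes (UNIV::'m set). of_int (sign p) * (\<Sum>q | q permutes (UNIV::'m set).
            of_int (sign q) * (\<Prod>j\<in>UNIV. S$(p j)$(q j))))"
    by (simp add: sum_distrib_left mult.assoc)
  also have "\<dots> = (\<Sum>p | p permutes (UNIV::'m set). det S)"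
  proof (rule sum.cong[OF refl])
    fix p assume "p \<in> {p. p permutes (UNIV::'m set)}"
    then have p: "p permutes UNIV" by simp
    have "of_int (sign p) * of_int (sign p) = (1::'a)"
      by (metis of_int_1 of_int_mult sign_idempotent)
    then show "of_int (sign p) * (\<Sum>q | q permutes (UNIV::'m set). of_int (sign q) * (\<Prod>j\<in>UNIV. S$(p j)$(q j))) = det S"
      by (simp add: perm_inner_sum[OF p] mult.assoc[symmetric])
  qed
  also have "\<dots> = of_nat (card {p. p permutes (UNIV::'m set)}) * det S" by simp
  also have "card {p. p permutes (UNIV::'m set)} = fact CARD('m)"
    by (rule card_permutations) auto
  finally show ?thesis .
qed

lemma det_sq_expand:
  fixes G :: "'m::finite \<Rightarrow> real^'m"
  shows "(det (\<chi> i j. G j $ i))^2 = (\<Sum>p | p permutes (UNIV::'m set). \<Sum>q | q permutes (UNIV::'m set).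
            of_int (sign p) * of_int (sign q) * (\<Prod>j\<in>UNIV. G j $ (p j) * G j $ (q j)))"
proof -
  have d: "det (\<chi> i j. G j $ i) = (\<Sum>p | p permutes (UNIV::'m set). of_int (sign p) * (\<Prod>j\<in>UNIV. G j $ (p j)))"
  proof -
    have "det (\<chi> i j. G j $ i) = det (transpose (\<chi> i j. G j $ i))" by simp
    also have "\<dots> = (\<Sum>p | p permutes (UNIV::'m set). of_int (sign p) * (\<Prod>j\<in>UNIV. G j $ (p j)))"
      unfolding det_def by (simp add: transpose_def)
    finally show ?thesis .
  qed
  show ?thesis
    unfolding d power2_eq_square sum_product
    by (intro sum.cong refl) (simp add: prod.distrib algebra_simps)
qed

lemma expect_det_sq:
  fixes \<mu> :: "'a measure" and F :: "'a \<Rightarrow> real^'m::finite" and c :: "'m \<Rightarrow> 'k" and K :: "'k set"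
  assumes P: "prob_space \<mu>" and c: "bij_betw c UNIV K"
    and int: "\<And>i j. integrable \<mu> (\<lambda>y. F y $ i * F y $ j)"
  shows "integrable (PiM K (\<lambda>_. \<mu>)) (\<lambda>x. (det (\<chi> i j. F (x (c j)) $ i))^2)"
    and "(\<integral>x. (det (\<chi> i j. F (x (c j)) $ i))^2 \<partial>PiM K (\<lambda>_. \<mu>))
          = fact CARD('m) * det (\<chi> i j. \<integral>y. F y $ i * F y $ j \<partial>\<mu>)"
proof -
  interpret prob_space \<mu> by fact
  interpret PS: product_sigma_finite "\<lambda>_. \<mu>"
    by (simp add: product_sigma_finite_def sigma_finite_measure_axioms)
  have fK: "finite K" using c by (metis bij_betw_finite finite_class.finite_UNIV)
  define ci where "ci = inv_into UNIV c"
  have cic: "ci (c j) = j" for j using c by (simp add: ci_def bij_betw_def)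
  have cci: "k \<in> K \<Longrightarrow> c (ci k) = k" for k using c by (simp add: ci_def bij_betw_def f_inv_into_f)
  define g :: "('m \<Rightarrow> 'm) \<Rightarrow> ('m \<Rightarrow> 'm) \<Rightarrow> 'm \<Rightarrow> 'a \<Rightarrow> real"
    where "g = (\<lambda>p q j y. F y $ (p j) * F y $ (q j))"
  define T :: "('m \<Rightarrow> 'm) \<Rightarrow> ('m \<Rightarrow> 'm) \<Rightarrow> ('k \<Rightarrow> 'a) \<Rightarrow> real"
    where "T = (\<lambda>p q x. \<Prod>j\<in>UNIV. g p q j (x (c j)))"
  have T_alt: "T p q x = (\<Prod>k\<in>K. g p q (ci k) (x k))" for p q x
    unfolding T_def using prod.reindex_bij_betw[OF c, of "\<lambda>k. g p q (ci k) (x k)"] by (simp add: cic)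
  have Tint: "integrable (PiM K (\<lambda>_. \<mu>)) (T p q)" for p q
    unfolding T_alt[abs_def] by (rule PS.product_integrable_prod[OF fK]) (simp add: g_def int)
  have Tval: "(\<integral>x. T p q x \<partial>PiM K (\<lambda>_. \<mu>)) = (\<Prod>j\<in>UNIV. (\<chi> i j. \<integral>y. F y $ i * F y $ j \<partial>\<mu>) $ (p j) $ (q j))" for p q
  proof -
    have "(\<integral>x. T p q x \<partial>PiM K (\<lambda>_. \<mu>)) = (\<Prod>k\<in>K. \<integral>y. g p q (ci k) y \<partial>\<mu>)"
      unfolding T_alt by (rule PS.product_integral_prod[OF fK]) (simp add: g_def int)
    also have "\<dots> = (\<Prod>j\<in>UNIV. \<integral>y. g p q j y \<partial>\<mu>)"
      using prod.reindex_bij_betw[OF c, of "\<lambda>k. \<integral>y. g p q (ci k) y \<partial>\<mu>"] by (simp add: cic)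
    finally show ?thesis by (simp add: g_def)
  qed
  have eq: "(\<lambda>x. (det (\<chi> i j. F (x (c j)) $ i))^2) = (\<lambda>x. \<Sum>p | p permutes (UNIV::'m set). \<Sum>q | q permutes (UNIV::'m set).
            of_int (sign p) * of_int (sign q) * T p q x)"
    by (rule ext, subst det_sq_expand[of "\<lambda>j. F (x (c j))" for x]) (simp add: T_def g_def)
  show "integrable (PiM K (\<lambda>_. \<mu>)) (\<lambda>x. (det (\<chi> i j. F (x (c j)) $ i))^2)"
    unfolding eq by (auto intro!: Bochner_Integration.integrable_sum integrable_mult_right Tint)
  have "(\<integral>x. (det (\<chi> i j. F (x (c j)) $ i))^2 \<partial>PiM K (\<lambda>_. \<mu>))
      = (\<Sum>p | p permutes (UNIV::'m set). \<Sum>q | q permutes (UNIV::'m set).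
            of_int (sign p) * of_int (sign q) * (\<integral>x. T p q x \<partial>PiM K (\<lambda>_. \<mu>)))"
    unfolding eq by (simp add: integral_sum integrable_sum integrable_mult_right Tint)
  also have "\<dots> = of_nat (fact CARD('m)) * det (\<chi> i j. \<integral>y. F y $ i * F y $ j \<partial>\<mu>)"
    unfolding Tval by (rule perm_double_sum)
  finally show "(\<integral>x. (det (\<chi> i j. F (x (c j)) $ i))^2 \<partial>PiM K (\<lambda>_. \<mu>))
          = fact CARD('m) * det (\<chi> i j. \<integral>y. F y $ i * F y $ j \<partial>\<mu>)" by simp
qed

definition lift :: "real^'n \<Rightarrow> real^('n::finite option)" where
  "lift y = (\<chi> i. case i of None \<Rightarrow> 1 | Some k \<Rightarrow> y $ k)"

lemma sum_UNIV_option: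
  fixes f :: "'n::finite option \<Rightarrow> 'a::comm_monoid_add"
  shows "(\<Sum>k\<in>UNIV. f k) = f None + (\<Sum>k\<in>UNIV. f (Some k))"
proof -
  have "(UNIV::'n option set) = insert None (Some ` UNIV)" by (auto simp: UNIV_option_conv)
  then have "(\<Sum>k\<in>UNIV. f k) = (\<Sum>k\<in>insert None (Some ` UNIV). f k)" by simp
  also have "\<dots> = f None + (\<Sum>k\<in>Some ` UNIV. f k)" by (subst sum.insert) auto
  also have "(\<Sum>k\<in>Some ` UNIV. f k) = (\<Sum>k\<in>UNIV. f (Some k))" by (simp add: sum.reindex)
  finally show ?thesis .
qed

lemma det_lift_cols:
  fixes a :: "real^'n::finite" and v :: "'n \<Rightarrow> real^'n"
  shows "det (\<chi> i j. v j $ i - a $ i) =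
         det (\<chi> (i::'n option) (j::'n option). lift (case j of None \<Rightarrow> a | Some k \<Rightarrow> v k) $ i)"
proof -
  define N :: "real^'n option^'n option" where
    "N = (\<chi> i j. lift (case j of None \<Rightarrow> a | Some k \<Rightarrow> v k) $ i)"
  define N' :: "real^'n option^'n option" where
    "N' = (\<chi> i j. if j = None then N$i$None else N$i$j - N$i$None)"
  define U :: "real^'n option^'n option" where
    "U = (\<chi> k j. if k = j then 1 else if k = None then 1 else 0)"
  have NU: "N = N' ** U"
  proof -
    have "N $ i $ j = (N' ** U) $ i $ j" for i j
      by (cases j) (simp_all add: matrix_matrix_mult_def sum_UNIV_option N'_def U_def if_distrib[of "\<lambda>x. _ * x"] cong: if_cong)
    then show ?thesis by (simp add: vec_eq_iff)
  qed
  have dU: "det U = 1"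
  proof -
    have "det U = det (transpose U)" by simp
    also have "\<dots> = det (\<chi> i j. transpose U $ Some i $ Some j)"
      by (rule det_bordered) (simp add: transpose_def U_def)
    also have "(\<chi> i j. transpose U $ Some i $ Some j) = (mat 1 :: real^'n^'n)"
      by (simp add: vec_eq_iff transpose_def U_def mat_def)
    finally show ?thesis by simp
  qed
  have dN': "det N' = det (\<chi> i j. v j $ i - a $ i)"
  proof -
    have "det N' = det (\<chi> i j. N' $ Some i $ Some j)"
      by (rule det_bordered) (simp add: N'_def N_def lift_def)
    also have "(\<chi> i j. N' $ Some i $ Some j) = (\<chi> i j. v j $ i - a $ i)"
      by (simp add: vec_eq_iff N'_def N_def lift_def)
    finally show ?thesis .
  qed
  show ?thesis using NU dU dN' by (simp add: det_mul N_def[symmetric])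
qed

lemma det_moment_cov:
  fixes m :: "real^'n::finite" and Sg :: "real^'n^'n" and S :: "real^'n option^'n option"
  assumes "S $ None $ None = 1" "\<And>j. S $ None $ Some j = m $ j" "\<And>i. S $ Some i $ None = m $ i"
    "\<And>i j. S $ Some i $ Some j = Sg $ i $ j"
  shows "det S = det (\<chi> i j. Sg $ i $ j - m $ i * m $ j)"
proof -
  define Cv :: "real^'n^'n" where "Cv = (\<chi> i j. Sg $ i $ j - m $ i * m $ j)"
  define L :: "real^'n option^'n option" where
    "L = (\<chi> i j. if i = j then 1 else if j = None then (case i of Some i' \<Rightarrow> m $ i' | None \<Rightarrow> 0) else 0)"
  define B :: "real^'n option^'n option" where
    "B = (\<chi> i j. case i of None \<Rightarrow> (if j = None then 1 else 0)
                | Some i' \<Rightarrow> (case j of None \<Rightarrow> 0 | Some j' \<Rightarrow> Cv $ i' $ j'))"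
  have SL: "S = L ** B ** transpose L"
  proof -
    have "S $ i $ j = (L ** B ** transpose L) $ i $ j" for i j
      by (cases i; cases j) (simp_all add: assms matrix_matrix_mult_def sum_UNIV_option L_def B_def Cv_def
          transpose_def if_distrib[of "\<lambda>x. _ * x"] if_distrib[of "\<lambda>x. x * _"] cong: if_cong)
    then show ?thesis by (simp add: vec_eq_iff)
  qed
  have dL: "det L = 1"
  proof -
    have "det L = det (\<chi> i j. L $ Some i $ Some j)"
      by (rule det_bordered) (simp add: L_def)
    also have "(\<chi> i j. L $ Some i $ Some j) = (mat 1 :: real^'n^'n)"
      by (simp add: vec_eq_iff L_def mat_def)
    finally show ?thesis by simp
  qed
  have dB: "det B = det Cv"
  proof -
    have "det B = det (\<chi> i j. B $ Some i $ Some j)"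
      by (rule det_bordered) (simp add: B_def)
    also have "(\<chi> i j. B $ Some i $ Some j) = Cv"
      by (simp add: vec_eq_iff B_def)
    finally show ?thesis .
  qed
  show ?thesis using SL dL dB by (simp add: det_mul Cv_def)
qed

lemma bm_borel:
  assumes "sets \<mu> = sets borel" "f \<in> borel_measurable borel"
  shows "f \<in> borel_measurable \<mu>"
  using assms measurable_cong_sets[OF assms(1) refl] by blast

lemma moments_integrable:
  fixes \<mu> :: "(real^'n) measure"
  assumes P: "prob_space \<mu>" and sets: "sets \<mu> = sets borel" and int2: "integrable \<mu> (\<lambda>x. (norm x)^2)"
  shows "integrable \<mu> (\<lambda>x. x$i * x$j)" and "integrable \<mu> (\<lambda>x. x$i)" and "integrable \<mu> (\<lambda>x. x)"
proof -
  interpret prob_space \<mu> by fact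
  have i1: "integrable \<mu> (\<lambda>x. 1 + (norm x)^2)" using int2 by simp
  show "integrable \<mu> (\<lambda>x. x$i * x$j)"
  proof (rule Bochner_Integration.integrable_bound[OF int2])
    show "(\<lambda>x. x$i * x$j) \<in> borel_measurable \<mu>" by (rule bm_borel[OF sets]) simp
    show "AE x in \<mu>. norm (x$i * x$j) \<le> norm ((norm x)^2)"
    proof (rule AE_I2)
      fix x :: "real^'n"
      have "\<bar>x$i\<bar> * \<bar>x$j\<bar> \<le> norm x * norm x"
        by (rule mult_mono[OF component_le_norm_cart component_le_norm_cart norm_ge_zero abs_ge_zero])
      moreover have "norm (x$i * x$j) = \<bar>x$i\<bar> * \<bar>x$j\<bar>" by (simp add: abs_mult)
      moreover have "norm ((norm x)^2) = norm x * norm x" by (simp add: power2_eq_square)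
      ultimately show "norm (x$i * x$j) \<le> norm ((norm x)^2)" by simp
    qed
  qed
  have b: "norm x \<le> 1 + (norm x)^2" for x :: "real^'n"
  proof (cases "norm x \<le> 1")
    case True then show ?thesis by (simp add: add_increasing2)
  next
    case False
    then have "norm x * 1 \<le> norm x * norm x" by (intro mult_left_mono) auto
    then show ?thesis by (simp add: power2_eq_square)
  qed
  show "integrable \<mu> (\<lambda>x. x$i)"
  proof (rule Bochner_Integration.integrable_bound[OF i1])
    show "(\<lambda>x. x$i) \<in> borel_measurable \<mu>" by (rule bm_borel[OF sets]) simp
    show "AE x in \<mu>. norm (x$i) \<le> norm (1 + (norm x)^2)"
    proof (rule AE_I2)
      fix x :: "real^'n"
      have "norm (x$i) \<le> norm x" using component_le_norm_cart[of x i] by simp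
      also have "\<dots> \<le> 1 + (norm x)^2" by (rule b)
      also have "\<dots> = norm (1 + (norm x)^2)" by simp
      finally show "norm (x$i) \<le> norm (1 + (norm x)^2)" .
    qed
  qed
  show "integrable \<mu> (\<lambda>x. x)"
  proof (rule Bochner_Integration.integrable_bound[OF i1])
    show "(\<lambda>x. x) \<in> borel_measurable \<mu>" by (rule bm_borel[OF sets]) simp
    show "AE x in \<mu>. norm x \<le> norm (1 + (norm x)^2)"
    proof (rule AE_I2)
      fix x :: "real^'n"
      have "norm x \<le> 1 + (norm x)^2" by (rule b)
      also have "\<dots> = norm (1 + (norm x)^2)" by simp
      finally show "norm x \<le> norm (1 + (norm x)^2)" .
    qed
  qed
qed

lemma index_bij:
  obtains e :: "'n::finite \<Rightarrow> nat" and c :: "'n option \<Rightarrow> nat"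
  where "bij_betw e UNIV {1..CARD('n)}" "bij_betw c UNIV {..CARD('n)}"
    "c None = 0" "\<And>j. c (Some j) = e j"
proof -
  obtain h :: "'n \<Rightarrow> nat" where h: "bij_betw h UNIV {0..<CARD('n)}"
    using ex_bij_betw_finite_nat[of "UNIV::'n set"] by auto
  define e where "e = (\<lambda>j. Suc (h j))"
  define c where "c = (\<lambda>j. case j of None \<Rightarrow> 0 | Some k \<Rightarrow> e k)"
  have "Suc ` {0..<CARD('n)} = {1..CARD('n)}"
    by (auto simp: image_iff)
  then have e: "bij_betw e UNIV {1..CARD('n)}"
    using bij_betw_trans[OF h, of Suc] by (simp add: e_def o_def bij_betw_def inj_on_def)
  have c: "bij_betw c UNIV {..CARD('n)}"
  proof -
    have "inj c" using e by (auto simp: inj_def c_def e_def bij_betw_def split: option.splits)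
    moreover have "range c = {..CARD('n)}"
    proof -
      have "range c = insert 0 (range e)"
        by (auto simp: c_def image_iff split: option.splits)
      also have "range e = {1..CARD('n)}" using e by (simp add: bij_betw_def)
      also have "insert 0 {1..CARD('n)} = {..CARD('n)}" by auto
      finally show ?thesis .
    qed
    ultimately show ?thesis by (simp add: bij_betw_def)
  qed
  show ?thesis by (rule that[OF e c]) (auto simp: c_def)
qed

lemma simplex_vol_lift:
  fixes x :: "nat \<Rightarrow> real^'n::finite"
  assumes e: "bij_betw e UNIV {1..CARD('n)}" and c0: "c None = 0" and cS: "\<And>j. c (Some j) = e j"
  shows "simplex_vol x = \<bar>det (\<chi> (i::'n option) j. lift (x (c j)) $ i)\<bar> / fact CARD('n)"
proof -
  have "(\<chi> (i::'n option) j. lift (x (c j)) $ i) =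
        (\<chi> (i::'n option) (j::'n option). lift (case j of None \<Rightarrow> x 0 | Some k \<Rightarrow> x (e k)) $ i)"
    by (simp add: vec_eq_iff c0 cS split: option.splits)
  then show ?thesis
    using simplex_vol_det[OF e, of x] det_lift_cols[of "\<lambda>j. x (e j)" "x 0"] by simp
qed

lemma I_A2_formula:
  fixes \<mu> :: "(real^'n::finite) measure"
  assumes P: "prob_space \<mu>" and sets: "sets \<mu> = sets borel" and int2: "integrable \<mu> (\<lambda>x. (norm x)^2)"
  shows "I_A2 \<mu> = ennreal ((CARD('n) + 1) / fact CARD('n) *
            det (\<chi> i j. (\<integral>x. x$i * x$j \<partial>\<mu>) - (\<integral>x. x$i \<partial>\<mu>) * (\<integral>x. x$j \<partial>\<mu>)))"
proof -
  interpret prob_space \<mu> by fact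
  obtain e :: "'n \<Rightarrow> nat" and c :: "'n option \<Rightarrow> nat" where
    e: "bij_betw e UNIV {1..CARD('n)}" and c: "bij_betw c UNIV {..CARD('n)}"
    and c0: "c None = 0" and cS: "\<And>j. c (Some j) = e j"
    using index_bij[where 'n='n] by blast
  let ?d = "CARD('n)"
  let ?Pi = "PiM {..?d} (\<lambda>_. \<mu>)"
  let ?D = "\<lambda>x. det (\<chi> (i::'n option) j. lift (x (c j)) $ i)"
  have intl: "integrable \<mu> (\<lambda>y. lift y $ i * lift y $ j)" for i j
    using moments_integrable[OF P sets int2]
    by (cases i; cases j) (simp_all add: lift_def)
  note ex = expect_det_sq[OF P c intl]
  have intD: "integrable ?Pi (\<lambda>x. (?D x)^2)" using ex(1) by simp
  have "I_A2 \<mu> = (\<integral>\<^sup>+ x. ennreal ((?D x)^2 / (fact ?d)^2) \<partial>?Pi)"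
    unfolding I_A2_def
    by (intro nn_integral_cong) (simp add: simplex_vol_lift[OF e c0 cS] power_divide)
  also have "\<dots> = ennreal (\<integral>x. (?D x)^2 / (fact ?d)^2 \<partial>?Pi)"
    by (intro nn_integral_eq_integral) (auto intro: intD)
  also have "(\<integral>x. (?D x)^2 / (fact ?d)^2 \<partial>?Pi) = (\<integral>x. (?D x)^2 \<partial>?Pi) / (fact ?d)^2"
    by simp
  also have "(\<integral>x. (?D x)^2 \<partial>?Pi) = fact (?d + 1) * det (\<chi> i j. \<integral>y. lift y $ i * lift y $ j \<partial>\<mu>)"
    using ex(2) by simp
  also have "det (\<chi> i j. \<integral>y. lift y $ i * lift y $ j \<partial>\<mu>) =
      det (\<chi> i j. (\<integral>x. x$i * x$j \<partial>\<mu>) - (\<integral>x. x$i \<partial>\<mu>) * (\<integral>x. x$j \<partial>\<mu>))"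
    by (rule det_moment_cov[where m = "\<chi> i. \<integral>x. x$i \<partial>\<mu>" and Sg = "\<chi> i j. \<integral>x. x$i * x$j \<partial>\<mu>", simplified])
       (simp_all add: lift_def prob_space)
  also have "fact (?d + 1) * det (\<chi> i j. (\<integral>x. x$i * x$j \<partial>\<mu>) - (\<integral>x. x$i \<partial>\<mu>) * (\<integral>x. x$j \<partial>\<mu>)) / (fact ?d)^2
      = (?d + 1) / fact ?d * det (\<chi> i j. (\<integral>x. x$i * x$j \<partial>\<mu>) - (\<integral>x. x$i \<partial>\<mu>) * (\<integral>x. x$j \<partial>\<mu>))"
    by (simp add: power2_eq_square field_simps)
  finally show ?thesis .
qed

lemma sym_inner:
  fixes C :: "real^'n^'n"
  assumes "transpose C = C"
  shows "x \<bullet> (C *v y) = (C *v x) \<bullet> y"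
proof -
  have "x \<bullet> (C *v y) = (x v* C) \<bullet> y" by (simp add: dot_lmul_matrix)
  also have "x v* C = transpose C *v x" by simp
  finally show ?thesis using assms by simp
qed

lemma quad_neg_imp_zero:
  fixes a b :: real
  assumes "\<And>t. 2 * t * a + t^2 * b \<le> 0"
  shows "a = 0"
proof (rule ccontr)
  assume a: "a \<noteq> 0"
  define t where "t = a / (\<bar>b\<bar> + 1)"
  have pos: "\<bar>b\<bar> + 1 > 0" by simp
  have h: "2 * t * a + t^2 * b \<le> 0" by (rule assms)
  have c1: "2 * t * a + t^2 * b \<ge> 2 * t * a - t^2 * \<bar>b\<bar>"
  proof -
    have "t^2 * b \<ge> - (t^2 * \<bar>b\<bar>)"
      using mult_left_mono[OF abs_ge_minus_self[of b], of "t^2"] by simp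
    then show ?thesis by simp
  qed
  have c2: "2 * t * a - t^2 * \<bar>b\<bar> = a^2 * (\<bar>b\<bar> + 2) / (\<bar>b\<bar> + 1)^2"
  proof -
    have gen: "\<And>B. B > 0 \<Longrightarrow> 2 * (a / B) * a - (a / B)^2 * (B - 1) = a^2 * (B + 1) / B^2"
      by (simp add: field_simps power2_eq_square)
    from gen[OF pos] show ?thesis by (simp add: t_def add.commute)
  qed
  have c3: "a^2 * (\<bar>b\<bar> + 2) / (\<bar>b\<bar> + 1)^2 > 0" using a pos by (intro divide_pos_pos mult_pos_pos) auto
  have c4: "0 < 2 * t * a - t^2 * \<bar>b\<bar>" using c2 c3 by simp
  show False using h c1 c4 by linarith
qed

lemma eigvec_exists:
  fixes C :: "real^'n^'n"
  assumes sym: "transpose C = C" and V: "subspace V" and inv: "\<And>v. v \<in> V \<Longrightarrow> C *v v \<in> V"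
    and ne: "V \<noteq> {0}"
  shows "\<exists>u\<in>V. norm u = 1 \<and> C *v u = (u \<bullet> (C *v u)) *\<^sub>R u"
proof -
  define q where "q = (\<lambda>v. v \<bullet> (C *v v))"
  define K where "K = V \<inter> sphere 0 1"
  have "compact K" unfolding K_def
    using V by (intro closed_Int_compact closed_subspace compact_sphere)
  moreover have "K \<noteq> {}"
  proof -
    obtain v where v: "v \<in> V" "v \<noteq> 0" using ne subspace_0[OF V] by blast
    then have "v /\<^sub>R norm v \<in> K" using V by (simp add: K_def subspace_scale)
    then show ?thesis by blast
  qed
  moreover have "continuous_on K q" unfolding q_def
    by (intro continuous_intros)
  ultimately obtain u where u: "u \<in> K" and umax: "\<And>y. y \<in> K \<Longrightarrow> q y \<le> q u"
    using continuous_attains_sup[of K q] by blast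
  have uV: "u \<in> V" and nu: "norm u = 1" using u by (auto simp: K_def)
  have uu: "u \<bullet> u = 1" using nu by (simp add: norm_eq_1)
  define l where "l = q u"
  have bound: "q w \<le> l * (w \<bullet> w)" if "w \<in> V" for w
  proof (cases "w = 0")
    case True then show ?thesis by (simp add: q_def)
  next
    case False
    then have "w /\<^sub>R norm w \<in> K" using that V by (simp add: K_def subspace_scale)
    then have "q (w /\<^sub>R norm w) \<le> l" using umax l_def by blast
    moreover have "q (w /\<^sub>R norm w) = q w / (norm w)^2"
      by (simp add: q_def matrix_vector_mult_scaleR power2_eq_square divide_simps)
    moreover have "(norm w)^2 = w \<bullet> w" by (simp add: power2_norm_eq_inner)
    moreover have "norm w > 0" using False by simp
    ultimately show ?thesis by (simp add: divide_le_eq mult.commute)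
  qed
  have orth: "v \<bullet> (C *v u) = 0" if vV: "v \<in> V" and vu: "v \<bullet> u = 0" for v
  proof (rule quad_neg_imp_zero[where b = "q v - l * (v \<bullet> v)"])
    fix t :: real
    have w: "u + t *\<^sub>R v \<in> V" using uV vV V by (simp add: subspace_add subspace_scale)
    have "q (u + t *\<^sub>R v) = l + 2 * t * (v \<bullet> (C *v u)) + t^2 * q v"
    proof -
      have s: "u \<bullet> (C *v v) = v \<bullet> (C *v u)"
        using sym_inner[OF sym, of u v] by (simp add: inner_commute)
      show ?thesis
        unfolding q_def l_def using s
        by (simp add: matrix_vector_right_distrib matrix_vector_mult_scaleR inner_add_left inner_add_right
              algebra_simps power2_eq_square)
    qed
    moreover have "(u + t *\<^sub>R v) \<bullet> (u + t *\<^sub>R v) = 1 + t^2 * (v \<bullet> v)"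
      using uu vu by (simp add: inner_add_left inner_add_right inner_commute algebra_simps power2_eq_square)
    ultimately have "l + 2 * t * (v \<bullet> (C *v u)) + t^2 * q v \<le> l * (1 + t^2 * (v \<bullet> v))"
      using bound[OF w] by simp
    then show "2 * t * (v \<bullet> (C *v u)) + t^2 * (q v - l * (v \<bullet> v)) \<le> 0"
      by (simp add: algebra_simps)
  qed
  define w where "w = C *v u - l *\<^sub>R u"
  have wV: "w \<in> V" unfolding w_def using inv[OF uV] uV V by (simp add: subspace_diff subspace_scale)
  have wu: "w \<bullet> u = 0"
    unfolding w_def l_def q_def using uu by (simp add: inner_diff_left inner_commute inner_diff_right)
  have "w \<bullet> (C *v u) = 0" by (rule orth[OF wV wu])
  then have "w \<bullet> w = 0"
    using wu by (simp add: w_def inner_diff_left inner_diff_right algebra_simps)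
  then have "w = 0" by simp
  then show ?thesis using uV nu by (auto simp: w_def l_def q_def)
qed

lemma eigbasis_aux:
  fixes C :: "real^'n^'n"
  assumes sym: "transpose C = C"
  shows "subspace V \<Longrightarrow> (\<And>v. v \<in> V \<Longrightarrow> C *v v \<in> V) \<Longrightarrow> dim V = n \<Longrightarrow>
    \<exists>B. B \<subseteq> V \<and> finite B \<and> card B = n \<and> (\<forall>u\<in>B. norm u = 1 \<and> C *v u = (u \<bullet> (C *v u)) *\<^sub>R u)
        \<and> (\<forall>u\<in>B. \<forall>w\<in>B. u \<noteq> w \<longrightarrow> u \<bullet> w = 0)"
proof (induction n arbitrary: V)
  case 0
  then show ?case by (intro exI[of _ "{}"]) auto
next
  case (Suc n)
  have ne: "V \<noteq> {0}" using Suc.prems(3) by auto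
  obtain u where uV: "u \<in> V" and nu: "norm u = 1" and eu: "C *v u = (u \<bullet> (C *v u)) *\<^sub>R u"
    using eigvec_exists[OF sym Suc.prems(1) Suc.prems(2) ne] by blast
  define l where "l = u \<bullet> (C *v u)"
  have u0: "u \<noteq> 0" using nu by auto
  define V' where "V' = {y \<in> V. \<forall>x \<in> span {u}. orthogonal x y}"
  have V'_alt: "y \<in> V' \<longleftrightarrow> y \<in> V \<and> u \<bullet> y = 0" for y
    by (auto simp: V'_def span_singleton orthogonal_def)
  have sV': "subspace V'"
  proof -
    have "V' = V \<inter> {y. \<forall>x \<in> span {u}. orthogonal x y}" by (auto simp: V'_def)
    then show ?thesis using Suc.prems(1) subspace_orthogonal_to_vectors by (metis subspace_inter)
  qed
  have iV': "C *v v \<in> V'" if "v \<in> V'" for v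
  proof -
    have "C *v v \<in> V" using that Suc.prems(2) V'_alt by blast
    moreover have "u \<bullet> (C *v v) = 0"
    proof -
      have "u \<bullet> (C *v v) = (C *v u) \<bullet> v" by (rule sym_inner[OF sym])
      also have "\<dots> = (l *\<^sub>R u) \<bullet> v" using eu by (simp only: l_def)
      also have "\<dots> = l * (u \<bullet> v)" by simp
      also have "u \<bullet> v = 0" using that V'_alt by blast
      finally show ?thesis by simp
    qed
    ultimately show ?thesis using V'_alt by blast
  qed
  have "dim V' + dim (span {u}) = dim V"
    unfolding V'_def
    by (rule dim_subspace_orthogonal_to_vectors) (use Suc.prems(1) uV in \<open>auto simp: span_minimal\<close>)
  moreover have "dim (span {u}) = 1" using u0 by (simp add: dim_insert)
  ultimately have dV': "dim V' = n" using Suc.prems(3) by simp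
  obtain B where B: "B \<subseteq> V'" "finite B" "card B = n"
    "\<forall>u\<in>B. norm u = 1 \<and> C *v u = (u \<bullet> (C *v u)) *\<^sub>R u"
    "\<forall>u\<in>B. \<forall>w\<in>B. u \<noteq> w \<longrightarrow> u \<bullet> w = 0"
    using Suc.IH[OF sV' iV' dV'] by blast
  have uB: "u \<notin> B"
  proof
    assume "u \<in> B"
    then have "u \<bullet> u = 0" using B(1) V'_alt by blast
    then show False using u0 by simp
  qed
  show ?case
  proof (intro exI[of _ "insert u B"] conjI)
    show "insert u B \<subseteq> V" using B(1) uV V'_alt by blast
    show "finite (insert u B)" using B(2) by simp
    show "card (insert u B) = Suc n" using B(2,3) uB by simp
    show "\<forall>v\<in>insert u B. norm v = 1 \<and> C *v v = (v \<bullet> (C *v v)) *\<^sub>R v" using B(4) nu eu by blast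
    show "\<forall>v\<in>insert u B. \<forall>w\<in>insert u B. v \<noteq> w \<longrightarrow> v \<bullet> w = 0"
      using B(5) B(1) V'_alt by (auto simp: inner_commute)
  qed
qed

lemma exp_gt_add_one_strict:
  fixes y :: real
  assumes "y \<noteq> 0"
  shows "1 + y < exp y"
proof (cases "1 + y / 2 \<ge> 0")
  case True
  have "exp y = (exp (y/2))^2" by (simp add: power2_eq_square flip: exp_add)
  also have "(1 + y/2)^2 \<le> (exp (y/2))^2"
    using True exp_ge_add_one_self[of "y/2"] by (intro power_mono) auto
  moreover have "1 + y < (1 + y/2)^2"
    using assms by (simp add: power2_eq_square field_simps) (metis not_real_square_gt_zero)
  ultimately show ?thesis by simp
next
  case False
  then have "1 + y < 0" by simp
  then show ?thesis using exp_gt_zero[of y] by linarith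
qed

lemma le_exp_minus_one:
  fixes y :: real
  shows "y \<le> exp (y - 1)" and "y \<noteq> 1 \<Longrightarrow> y < exp (y - 1)"
  using exp_ge_add_one_self[of "y - 1"] exp_gt_add_one_strict[of "y - 1"] by auto

lemma prod_strict_aux:
  fixes x e :: "'i \<Rightarrow> real"
  assumes "finite I" "\<And>i. i \<in> I \<Longrightarrow> 0 \<le> x i" "\<And>i. i \<in> I \<Longrightarrow> x i \<le> e i"
    "\<And>i. i \<in> I \<Longrightarrow> 0 < e i" "j \<in> I" "x j < e j"
  shows "(\<Prod>i\<in>I. x i) < (\<Prod>i\<in>I. e i)"
proof -
  have "(\<Prod>i\<in>I. x i) = x j * (\<Prod>i\<in>I - {j}. x i)" using assms by (simp add: prod.remove)
  also have "\<dots> \<le> x j * (\<Prod>i\<in>I - {j}. e i)"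
    using assms by (intro mult_left_mono prod_mono) auto
  also have "\<dots> < e j * (\<Prod>i\<in>I - {j}. e i)"
    using assms by (intro mult_strict_right_mono prod_pos) auto
  also have "\<dots> = (\<Prod>i\<in>I. e i)" using assms by (simp add: prod.remove)
  finally show ?thesis .
qed

lemma amgm:
  fixes x :: "'i \<Rightarrow> real"
  assumes fin: "finite I" and n: "card I = n" "n > 0" and nn: "\<And>i. i \<in> I \<Longrightarrow> 0 \<le> x i"
  shows "(\<Prod>i\<in>I. x i) \<le> ((\<Sum>i\<in>I. x i) / n)^n"
    and "(\<Prod>i\<in>I. x i) = ((\<Sum>i\<in>I. x i) / n)^n \<Longrightarrow> \<forall>i\<in>I. x i = (\<Sum>i\<in>I. x i) / n"
proof -
  define a where "a = (\<Sum>i\<in>I. x i) / n"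
  have a0: "a \<ge> 0" using nn by (simp add: a_def sum_nonneg)
  have "(\<Prod>i\<in>I. x i) \<le> a^n \<and> ((\<Prod>i\<in>I. x i) = a^n \<longrightarrow> (\<forall>i\<in>I. x i = a))"
  proof (cases "a = 0")
    case True
    then have "(\<Sum>i\<in>I. x i) = 0" using n by (simp add: a_def)
    then have "\<forall>i\<in>I. x i = 0" using sum_nonneg_eq_0_iff[OF fin] nn by blast
    then show ?thesis using True n fin by (simp add: prod_zero_iff)
  next
    case False
    then have ap: "a > 0" using a0 by simp
    define y where "y = (\<lambda>i. x i / a)"
    have yprod: "(\<Prod>i\<in>I. x i) = a^n * (\<Prod>i\<in>I. y i)"
    proof -
      have "(\<Prod>i\<in>I. x i) = (\<Prod>i\<in>I. a * y i)" using ap by (simp add: y_def)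
      also have "\<dots> = a^n * (\<Prod>i\<in>I. y i)" using n by (simp add: prod.distrib)
      finally show ?thesis .
    qed
    have esum: "(\<Prod>i\<in>I. exp (y i - 1)) = 1"
    proof -
      have "(\<Sum>i\<in>I. y i - 1) = (\<Sum>i\<in>I. x i) / a - n"
        using n by (simp add: y_def sum_subtractf sum_divide_distrib)
      also have "\<dots> = 0" using ap n by (auto simp: a_def)
      finally show ?thesis using fin by (simp add: exp_sum[symmetric])
    qed
    have ynn: "i \<in> I \<Longrightarrow> 0 \<le> y i" for i using nn ap by (simp add: y_def)
    have le: "(\<Prod>i\<in>I. y i) \<le> 1"
      using prod_mono[of I y "\<lambda>i. exp (y i - 1)"] ynn le_exp_minus_one(1) esum by auto
    have eq: "\<forall>i\<in>I. x i = a" if "(\<Prod>i\<in>I. x i) = a^n"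
    proof (rule ccontr)
      assume "\<not> (\<forall>i\<in>I. x i = a)"
      then obtain j where j: "j \<in> I" "x j \<noteq> a" by blast
      then have "y j \<noteq> 1" using ap by (simp add: y_def)
      then have "(\<Prod>i\<in>I. y i) < 1"
      proof -
        have "(\<Prod>i\<in>I. y i) < (\<Prod>i\<in>I. exp (y i - 1))"
          by (rule prod_strict_aux[of I y "\<lambda>i. exp (y i - 1)" j, OF fin ynn le_exp_minus_one(1) _ j(1)])
             (simp_all add: le_exp_minus_one(2)[OF \<open>y j \<noteq> 1\<close>])
        then show ?thesis using esum by simp
      qed
      then have "(\<Prod>i\<in>I. x i) < a^n" using yprod ap by simp
      then show False using that by simp
    qed
    have "(\<Prod>i\<in>I. x i) \<le> a^n"
    proof -
      have "a^n * (\<Prod>i\<in>I. y i) \<le> a^n * 1" using le ap by (intro mult_left_mono) auto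
      then show ?thesis using yprod by simp
    qed
    then show ?thesis using eq by blast
  qed
  then show "(\<Prod>i\<in>I. x i) \<le> ((\<Sum>i\<in>I. x i) / n)^n"
    and "(\<Prod>i\<in>I. x i) = ((\<Sum>i\<in>I. x i) / n)^n \<Longrightarrow> \<forall>i\<in>I. x i = (\<Sum>i\<in>I. x i) / n"
    unfolding a_def by blast+
qed

lemma det_trace_ineq:
  fixes C :: "real^'n^'n"
  assumes sym: "transpose C = C" and psd: "\<And>v. 0 \<le> v \<bullet> (C *v v)"
  shows "det C \<le> (trace C / CARD('n))^CARD('n)"
    and "det C = (trace C / CARD('n))^CARD('n) \<Longrightarrow> C = mat (trace C / CARD('n))"
proof -
  have dimU: "dim (UNIV :: (real^'n) set) = CARD('n)" by simp
  obtain B where B: "finite B" "card B = CARD('n)"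
    "\<forall>u\<in>B. norm u = 1 \<and> C *v u = (u \<bullet> (C *v u)) *\<^sub>R u"
    "\<forall>u\<in>B. \<forall>w\<in>B. u \<noteq> w \<longrightarrow> u \<bullet> w = 0"
    using eigbasis_aux[OF sym, of UNIV "CARD('n)"] dimU by auto
  obtain g where g: "bij_betw g (UNIV::'n set) B"
    using finite_same_card_bij[of "UNIV::'n set" B] B(1,2) by auto
  have gB: "g j \<in> B" for j using g by (auto simp: bij_betw_def)
  have ginj: "g j = g k \<Longrightarrow> j = k" for j k using g by (auto simp: bij_betw_def inj_def)
  define Q :: "real^'n^'n" where "Q = (\<chi> i j. g j $ i)"
  define l where "l = (\<lambda>j. g j \<bullet> (C *v g j))"
  define D :: "real^'n^'n" where "D = (\<chi> j k. if j = k then l j else 0)"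
  have gg: "g j \<bullet> g k = (if j = k then 1 else 0)" for j k
  proof (cases "j = k")
    case True
    then show ?thesis using B(3) gB[of j] by (simp add: norm_eq_1)
  next
    case False
    then show ?thesis using B(4) gB[of j] gB[of k] ginj by auto
  qed
  have gg': "(\<Sum>i\<in>UNIV. g j $ i * g k $ i) = (if j = k then 1 else 0)" for j k
    using gg[of j k] by (simp add: inner_vec_def)
  have QtQ: "transpose Q ** Q = mat 1"
    by (simp add: vec_eq_iff matrix_matrix_mult_def transpose_def Q_def mat_def gg')
  then have QQt: "Q ** transpose Q = mat 1" by (simp add: matrix_left_right_inverse)
  have CQ: "C ** Q = Q ** D"
  proof -
    have ev: "(C *v g k) $ i = l k * g k $ i" for i k
    proof -
      have "C *v g k = l k *\<^sub>R g k" using B(3) gB[of k] by (simp add: l_def)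
      then show ?thesis by simp
    qed
    show ?thesis
      using ev by (simp add: vec_eq_iff matrix_matrix_mult_def Q_def D_def matrix_vector_mult_def
          if_distrib[of "\<lambda>x. _ * x"] sum.delta' mult.commute cong: if_cong)
  qed
  have Ceq: "C = Q ** D ** transpose Q"
  proof -
    have "C = C ** (Q ** transpose Q)" by (simp add: QQt)
    also have "\<dots> = Q ** D ** transpose Q" by (simp add: matrix_mul_assoc CQ)
    finally show ?thesis .
  qed
  have dQ: "det Q * det Q = 1"
    using QtQ det_mul[of "transpose Q" Q] by simp
  have detC: "det C = (\<Prod>j\<in>UNIV. l j)"
  proof -
    have "det C = det Q * det D * det Q" using Ceq by (simp add: det_mul)
    also have "\<dots> = det D" using dQ by (simp add: algebra_simps)
    also have "\<dots> = (\<Prod>j\<in>UNIV. l j)" by (simp add: det_diagonal D_def)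
    finally show ?thesis .
  qed
  have trC: "trace C = (\<Sum>j\<in>UNIV. l j)"
  proof -
    have "trace C = trace (Q ** (D ** transpose Q))" using Ceq by (simp add: matrix_mul_assoc)
    also have "\<dots> = trace ((D ** transpose Q) ** Q)" by (rule trace_mul_sym)
    also have "\<dots> = trace D"
      by (simp only: matrix_mul_assoc[symmetric, of D "transpose Q" Q] QtQ matrix_mul_rid)
    also have "\<dots> = (\<Sum>j\<in>UNIV. l j)" by (simp add: trace_def D_def)
    finally show ?thesis .
  qed
  have lnn: "0 \<le> l j" for j by (simp add: l_def psd)
  note am = amgm[of "UNIV::'n set" "CARD('n)" l, OF finite_class.finite_UNIV refl zero_less_card_finite lnn]
  show "det C \<le> (trace C / CARD('n))^CARD('n)" unfolding detC trC by (rule am(1))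
  assume "det C = (trace C / CARD('n))^CARD('n)"
  then have "\<forall>j. l j = trace C / CARD('n)" using am(2) unfolding detC trC by blast
  then have Dc: "D = (trace C / CARD('n)) *\<^sub>R mat 1" by (simp add: D_def vec_eq_iff mat_def)
  define c where "c = trace C / CARD('n)"
  have "C = Q ** (c *\<^sub>R mat 1) ** transpose Q" using Ceq Dc by (simp add: c_def)
  also have "\<dots> = c *\<^sub>R (Q ** transpose Q)"
    by (simp add: matrix_scalar_ac scalar_matrix_assoc)
  finally have "C = (trace C / CARD('n)) *\<^sub>R (Q ** transpose Q)" by (simp add: c_def)
  then show "C = mat (trace C / CARD('n))" using QQt by (simp add: vec_eq_iff mat_def)
qed

definition cov_mat :: "(real^'n::finite) measure \<Rightarrow> real^'n^'n" where
  "cov_mat \<mu> = (\<chi> i j. (\<integral>x. x$i * x$j \<partial>\<mu>) - (\<integral>x. x$i \<partial>\<mu>) * (\<integral>x. x$j \<partial>\<mu>))"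

lemma cov_sym: "transpose (cov_mat \<mu>) = cov_mat \<mu>"
  by (simp add: cov_mat_def transpose_def vec_eq_iff mult.commute)

lemma P_star_iff:
  fixes \<mu> :: "(real^'n::finite) measure"
  assumes "sets \<mu> = sets borel"
  shows "(\<integral>\<^sup>+ x. ennreal ((norm x)^2) \<partial>\<mu>) = 1 \<longleftrightarrow> integrable \<mu> (\<lambda>x. (norm x)^2) \<and> (\<integral>x. (norm x)^2 \<partial>\<mu>) = 1"
proof -
  have "(\<lambda>x. (norm x)^2) \<in> borel_measurable \<mu>" by (rule bm_borel[OF assms]) simp
  then show ?thesis using nn_integral_eq_integrable[of "\<lambda>x. (norm x)^2" \<mu> 1] by simp
qed

lemma norm_sq_sum: "(norm (x::real^'n::finite))^2 = (\<Sum>i\<in>UNIV. x$i * x$i)"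
  by (simp add: power2_norm_eq_inner inner_vec_def)

lemma cov_psd:
  fixes \<mu> :: "(real^'n::finite) measure"
  assumes P: "prob_space \<mu>" and sets: "sets \<mu> = sets borel" and int2: "integrable \<mu> (\<lambda>x. (norm x)^2)"
  shows "0 \<le> v \<bullet> (cov_mat \<mu> *v v)"
proof -
  interpret prob_space \<mu> by fact
  note mi = moments_integrable[OF P sets int2]
  define f where "f = (\<lambda>x. v \<bullet> x)"
  have f_alt: "f x = (\<Sum>i\<in>UNIV. v$i * x$i)" for x by (simp add: f_def inner_vec_def)
  have f2_alt: "(f x)^2 = (\<Sum>i\<in>UNIV. \<Sum>j\<in>UNIV. v$i * v$j * (x$i * x$j))" for x
    unfolding f_alt power2_eq_square sum_product by (intro sum.cong refl) (simp add: mult_ac)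
  have fint: "integrable \<mu> f" unfolding f_alt[abs_def] using mi(2) by auto
  have f2int: "integrable \<mu> (\<lambda>x. (f x)^2)" unfolding f2_alt using mi(1) by auto
  have Ef: "expectation f = (\<Sum>i\<in>UNIV. v$i * (\<integral>x. x$i \<partial>\<mu>))"
    unfolding f_alt using mi(2) by (simp add: integral_sum)
  have Ef2: "expectation (\<lambda>x. (f x)^2) = (\<Sum>i\<in>UNIV. \<Sum>j\<in>UNIV. v$i * v$j * (\<integral>x. x$i * x$j \<partial>\<mu>))"
    unfolding f2_alt using mi(1) by (simp add: integral_sum)
  have "v \<bullet> (cov_mat \<mu> *v v) = (\<Sum>i\<in>UNIV. \<Sum>j\<in>UNIV. v$i * v$j * (\<integral>x. x$i * x$j \<partial>\<mu>))
        - (\<Sum>i\<in>UNIV. \<Sum>j\<in>UNIV. (v$i * (\<integral>x. x$i \<partial>\<mu>)) * (v$j * (\<integral>x. x$j \<partial>\<mu>)))"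
    by (simp add: inner_vec_def matrix_vector_mult_def cov_mat_def sum_distrib_left
        algebra_simps sum_subtractf)
  also have "(\<Sum>i\<in>UNIV. \<Sum>j\<in>UNIV. (v$i * (\<integral>x. x$i \<partial>\<mu>)) * (v$j * (\<integral>x. x$j \<partial>\<mu>))) = (expectation f)^2"
    unfolding Ef power2_eq_square sum_product ..
  also have "(\<Sum>i\<in>UNIV. \<Sum>j\<in>UNIV. v$i * v$j * (\<integral>x. x$i * x$j \<partial>\<mu>)) - (expectation f)^2 = variance f"
    using variance_eq[OF fint f2int] Ef2 by simp
  also have "\<dots> \<ge> 0" by (rule variance_positive)
  finally show ?thesis .
qed

lemma cov_trace:
  fixes \<mu> :: "(real^'n::finite) measure"
  assumes P: "prob_space \<mu>" and sets: "sets \<mu> = sets borel" and int2: "integrable \<mu> (\<lambda>x. (norm x)^2)"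
  shows "trace (cov_mat \<mu>) = (\<integral>x. (norm x)^2 \<partial>\<mu>) - (\<Sum>i\<in>UNIV. (\<integral>x. x$i \<partial>\<mu>)^2)"
proof -
  note mi = moments_integrable[OF P sets int2]
  have "(\<integral>x. (norm x)^2 \<partial>\<mu>) = (\<Sum>i\<in>UNIV. \<integral>x. x$i * x$i \<partial>\<mu>)"
    unfolding norm_sq_sum using mi(1) by (simp add: integral_sum)
  then show ?thesis
    by (simp add: trace_def cov_mat_def sum_subtractf power2_eq_square)
qed

lemma vec_integral_nth:
  fixes \<mu> :: "(real^'n::finite) measure"
  assumes "integrable \<mu> (\<lambda>x. x)"
  shows "(\<integral>x. x \<partial>\<mu>) $ i = (\<integral>x. x$i \<partial>\<mu>)"
  using integral_bounded_linear[OF bounded_linear_vec_nth assms, of i] by simp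

lemma det_mat_const: "det (mat c :: real^'n::finite^'n) = c ^ CARD('n)"
  by (simp add: det_diagonal mat_def)

lemma main_bound:
  fixes \<nu> :: "(real^'n::finite) measure"
  assumes "\<nu> \<in> P_star"
  shows "I_A2 \<nu> = ennreal ((CARD('n)+1) / fact CARD('n) * det (cov_mat \<nu>))"
    and "det (cov_mat \<nu>) \<le> (1 / CARD('n))^CARD('n)"
    and "det (cov_mat \<nu>) \<ge> (1 / CARD('n))^CARD('n) \<Longrightarrow> balanced \<nu> \<and> isotropic \<nu>"
proof -
  have P: "prob_space \<nu>" and sets: "sets \<nu> = sets borel"
    and nn: "(\<integral>\<^sup>+ x. ennreal ((norm x)^2) \<partial>\<nu>) = 1"
    using assms by (auto simp: P_star_def)
  have int2: "integrable \<nu> (\<lambda>x. (norm x)^2)" and E2: "(\<integral>x. (norm x)^2 \<partial>\<nu>) = 1"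
    using nn P_star_iff[OF sets] by auto
  note mi = moments_integrable[OF P sets int2]
  show "I_A2 \<nu> = ennreal ((CARD('n)+1) / fact CARD('n) * det (cov_mat \<nu>))"
    using I_A2_formula[OF P sets int2] by (simp add: cov_mat_def)
  let ?C = "cov_mat \<nu>"
  let ?d = "real CARD('n)"
  let ?m = "\<lambda>i. \<integral>x. x$i \<partial>\<nu>"
  have psd: "\<And>v. 0 \<le> v \<bullet> (?C *v v)" by (rule cov_psd[OF P sets int2])
  note ineq = det_trace_ineq[OF cov_sym psd]
  have tr: "trace ?C = 1 - (\<Sum>i\<in>UNIV. (?m i)^2)"
    using cov_trace[OF P sets int2] E2 by simp
  have diag: "0 \<le> ?C $ i $ i" for i
    using psd[of "axis i 1"] by (simp add: matrix_vector_mult_basis column_def inner_axis')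
  have tr0: "0 \<le> trace ?C" unfolding trace_def by (intro sum_nonneg diag)
  have tr1: "trace ?C \<le> 1" using tr by (simp add: sum_nonneg)
  have dpos: "?d > 0" by simp
  have "(trace ?C / ?d)^CARD('n) \<le> (1 / ?d)^CARD('n)"
    using tr0 tr1 dpos by (intro power_mono divide_right_mono) auto
  then show le: "det ?C \<le> (1 / ?d)^CARD('n)" using ineq(1) by linarith
  assume ge: "det ?C \<ge> (1 / ?d)^CARD('n)"
  have T1: "trace ?C = 1"
  proof (rule ccontr)
    assume "trace ?C \<noteq> 1"
    then have "trace ?C / ?d < 1 / ?d" using tr1 dpos by (simp add: divide_strict_right_mono)
    then have "(trace ?C / ?d)^CARD('n) < (1 / ?d)^CARD('n)"
      using tr0 dpos by (intro power_strict_mono) auto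
    then show False using ineq(1) ge by linarith
  qed
  then have "(\<Sum>i\<in>UNIV. (?m i)^2) = 0" using tr by simp
  then have m0: "?m i = 0" for i using sum_nonneg_eq_0_iff[of UNIV "\<lambda>i. (?m i)^2"] by simp
  have "det ?C = (trace ?C / ?d)^CARD('n)" using ineq(1) ge T1 le by simp
  then have Cm: "?C = mat (1 / ?d)" using ineq(2) T1 by simp
  have iso: "isotropic \<nu>"
    unfolding isotropic_def
  proof (intro allI conjI)
    fix i j
    show "integrable \<nu> (\<lambda>x. x$i * x$j)" by (rule mi(1))
    have "?C $ i $ j = (if i = j then 1 / ?d else 0)" using Cm by (simp add: mat_def)
    then show "(\<integral>x. x$i * x$j \<partial>\<nu>) = (if i = j then 1 / real CARD('n) else 0)"
      by (simp add: cov_mat_def m0)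
  qed
  have bal: "balanced \<nu>"
    unfolding balanced_def
  proof
    show "integrable \<nu> (\<lambda>x. x)" by (rule mi(3))
    show "(\<integral>x. x \<partial>\<nu>) = 0" by (simp add: vec_eq_iff vec_integral_nth[OF mi(3)] m0)
  qed
  show "balanced \<nu> \<and> isotropic \<nu>" using bal iso by simp
qed

lemma bal_iso_props:
  fixes \<mu> :: "(real^'n::finite) measure"
  assumes P: "prob_space \<mu>" and sets: "sets \<mu> = sets borel" and bal: "balanced \<mu>" and iso: "isotropic \<mu>"
  shows "\<mu> \<in> P_star" and "det (cov_mat \<mu>) = (1 / CARD('n))^CARD('n)"
proof -
  have ii: "integrable \<mu> (\<lambda>x. x$i * x$j)" "(\<integral>x. x$i * x$j \<partial>\<mu>) = (if i = j then 1 / real CARD('n) else 0)" for i j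
    using iso by (auto simp: isotropic_def)
  have int2: "integrable \<mu> (\<lambda>x. (norm x)^2)" unfolding norm_sq_sum using ii(1) by auto
  have "(\<integral>x. (norm x)^2 \<partial>\<mu>) = (\<Sum>i\<in>UNIV. \<integral>x. x$i * x$i \<partial>\<mu>)"
    unfolding norm_sq_sum using ii(1) by (simp add: integral_sum)
  also have "\<dots> = 1" using ii(2) by simp
  finally have E2: "(\<integral>x. (norm x)^2 \<partial>\<mu>) = 1" .
  show "\<mu> \<in> P_star" unfolding P_star_def using P sets P_star_iff[OF sets] int2 E2 by simp
  have bi: "integrable \<mu> (\<lambda>x. x)" "(\<integral>x. x \<partial>\<mu>) = 0" using bal by (auto simp: balanced_def)
  have m0: "(\<integral>x. x$i \<partial>\<mu>) = 0" for i using vec_integral_nth[OF bi(1), of i] bi(2) by simp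
  have "cov_mat \<mu> = mat (1 / CARD('n))"
    by (simp add: cov_mat_def vec_eq_iff mat_def m0 ii(2))
  then show "det (cov_mat \<mu>) = (1 / CARD('n))^CARD('n)" by (simp add: det_mat_const)
qed

definition nu0 :: "(real^'n::finite) measure" where
  "nu0 = distr (measure_pmf (pmf_of_set (UNIV :: ('n \<times> bool) set))) borel
           (\<lambda>(k, b). (if b then 1 else -1) *\<^sub>R axis k (1::real))"

lemma nu0_props:
  shows "prob_space (nu0 :: (real^'n::finite) measure)" and "sets (nu0 :: (real^'n) measure) = sets borel"
    and "balanced (nu0 :: (real^'n) measure)" and "isotropic (nu0 :: (real^'n) measure)"
proof -
  let ?p = "pmf_of_set (UNIV :: ('n \<times> bool) set)"
  let ?g = "(\<lambda>(k, b). (if b then 1 else -1) *\<^sub>R axis k (1::real)) :: 'n \<times> bool \<Rightarrow> real^'n"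
  have g: "?g \<in> measurable (measure_pmf ?p) borel" by simp
  show "prob_space (nu0 :: (real^'n) measure)" unfolding nu0_def
    by (rule prob_space.prob_space_distr[OF prob_space_measure_pmf g])
  show "sets (nu0 :: (real^'n) measure) = sets borel" by (simp add: nu0_def)
  have fin: "finite (set_pmf ?p)" by simp
  have int: "integrable (nu0 :: (real^'n) measure) f" if "f \<in> borel_measurable borel" for f :: "real^'n \<Rightarrow> 'b::{banach, second_countable_topology}"
    unfolding nu0_def using that by (subst integrable_distr_eq[OF g]) (auto intro: integrable_measure_pmf_finite[OF fin])
  have intg: "(\<integral>x. f x \<partial>(nu0 :: (real^'n) measure)) = (\<Sum>kb\<in>UNIV. f (?g kb)) / real (2 * CARD('n))"
    if "f \<in> borel_measurable borel" for f :: "real^'n \<Rightarrow> real"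
  proof -
    have "(\<integral>x. f x \<partial>(nu0 :: (real^'n) measure)) = (\<integral>x. f (?g x) \<partial>measure_pmf ?p)"
      unfolding nu0_def using that by (rule integral_distr[OF g])
    also have "\<dots> = (\<Sum>kb\<in>UNIV. f (?g kb)) / real (card (UNIV :: ('n \<times> bool) set))"
      by (rule integral_pmf_of_set) auto
    also have "card (UNIV :: ('n \<times> bool) set) = 2 * CARD('n)"
      by (simp add: card_UNIV_bool)
    finally show ?thesis .
  qed
  have sumkb: "(\<Sum>kb\<in>UNIV. h kb) = (\<Sum>k\<in>UNIV. h (k, True) + h (k, False))" for h :: "'n \<times> bool \<Rightarrow> real"
  proof -
    have "(\<Sum>kb\<in>UNIV. h kb) = (\<Sum>kb\<in>UNIV \<times> UNIV. h kb)" by (simp add: UNIV_Times_UNIV)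
    also have "\<dots> = (\<Sum>k\<in>UNIV. \<Sum>b\<in>UNIV. h (k, b))" by (simp add: sum.cartesian_product)
    also have "\<dots> = (\<Sum>k\<in>UNIV. h (k, True) + h (k, False))" by (simp add: UNIV_bool add.commute)
    finally show ?thesis .
  qed
  show "isotropic (nu0 :: (real^'n) measure)"
    unfolding isotropic_def
  proof (intro allI conjI)
    fix i j :: 'n
    show "integrable nu0 (\<lambda>x::real^'n. x$i * x$j)" by (rule int) simp
    have "(\<integral>x. x$i * x$j \<partial>(nu0 :: (real^'n) measure)) = (\<Sum>k\<in>UNIV. 2 * (axis k (1::real) $ i * axis k 1 $ j)) / real (2 * CARD('n))"
      by (subst intg) (simp_all add: sumkb)
    also have "\<dots> = (if i = j then 1 / real CARD('n) else 0)"
    proof (cases "i = j")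
      case True
      have "(\<Sum>k\<in>UNIV. 2 * (axis k (1::real) $ i * axis k 1 $ j)) = (\<Sum>k\<in>UNIV. if k = j then 2 else 0)"
        using True by (intro sum.cong) (auto simp: axis_def)
      also have "\<dots> = 2" by simp
      finally show ?thesis using True by simp
    next
      case False
      have z: "\<And>k. 2 * (axis k (1::real) $ i * axis k 1 $ j) = 0"
        using False by (auto simp: axis_def)
      have "(\<Sum>k\<in>UNIV. 2 * (axis k (1::real) $ i * axis k 1 $ j)) = 0"
        by (rule sum.neutral) (use z in blast)
      then show ?thesis using False by simp
    qed
    finally show "(\<integral>x. x$i * x$j \<partial>(nu0 :: (real^'n) measure)) = (if i = j then 1 / real CARD('n) else 0)" .
  qed
  show "balanced (nu0 :: (real^'n) measure)"
    unfolding balanced_def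
  proof
    show ib: "integrable nu0 (\<lambda>x::real^'n. x)" by (rule int) simp
    have "(\<integral>x. x \<partial>(nu0 :: (real^'n) measure)) $ i = 0" for i
    proof -
      have "(\<integral>x. x \<partial>(nu0 :: (real^'n) measure)) $ i = (\<integral>x. x$i \<partial>(nu0 :: (real^'n) measure))"
        by (rule vec_integral_nth[OF ib])
      also have "\<dots> = 0" by (subst intg) (simp_all add: sumkb)
      finally show ?thesis .
    qed
    then show "(\<integral>x. x \<partial>(nu0 :: (real^'n) measure)) = 0" by (simp add: vec_eq_iff)
  qed
qed

theorem theorem5p3:
  fixes \<mu> :: "(real^'n) measure"
  assumes "CARD('n) \<ge> 2"
    and "sets \<mu> = sets borel"
  shows "(\<mu> \<in> P_star \<and> (\<forall>\<nu>::(real^'n) measure\<in>P_star. I_A2 \<nu> \<le> I_A2 \<mu>))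
         \<longleftrightarrow> (prob_space \<mu> \<and> balanced \<mu> \<and> isotropic \<mu>)"
proof -
  define K where "K = (real CARD('n) + 1) / fact CARD('n)"
  define V where "V = (1 / real CARD('n))^CARD('n)"
  have Kpos: "K > 0" by (simp add: K_def add.commute)
  have Vpos: "V > 0" by (simp add: V_def)
  have n0P: "(nu0 :: (real^'n) measure) \<in> P_star" and n0det: "det (cov_mat (nu0 :: (real^'n) measure)) = V"
    using bal_iso_props[OF nu0_props(1) nu0_props(2) nu0_props(3) nu0_props(4)] by (auto simp: V_def)
  have In0: "I_A2 (nu0 :: (real^'n) measure) = ennreal (K * V)"
    using main_bound(1)[OF n0P] n0det by (simp add: K_def add.commute)
  have upper: "I_A2 \<nu> \<le> ennreal (K * V)" if "\<nu> \<in> P_star" for \<nu> :: "(real^'n) measure"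
  proof -
    have "I_A2 \<nu> = ennreal (K * det (cov_mat \<nu>))" using main_bound(1)[OF that] by (simp add: K_def add.commute)
    also have "\<dots> \<le> ennreal (K * V)"
      using main_bound(2)[OF that] Kpos by (intro ennreal_leI mult_left_mono) (auto simp: V_def)
    finally show ?thesis .
  qed
  show ?thesis
  proof
    assume L: "\<mu> \<in> P_star \<and> (\<forall>\<nu>::(real^'n) measure\<in>P_star. I_A2 \<nu> \<le> I_A2 \<mu>)"
    then have muP: "\<mu> \<in> P_star" by simp
    have Imu: "I_A2 \<mu> = ennreal (K * det (cov_mat \<mu>))"
      using main_bound(1)[OF muP] by (simp add: K_def add.commute)
    have "I_A2 (nu0 :: (real^'n) measure) \<le> I_A2 \<mu>" using L n0P by blast
    then have "ennreal (K * V) \<le> ennreal (K * det (cov_mat \<mu>))"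
      using In0 Imu by simp
    then have "K * V \<le> K * det (cov_mat \<mu>)"
      using Kpos Vpos
      by (metis ennreal_le_iff ennreal_less_zero_iff linorder_not_le mult_pos_pos nle_le)
    then have "V \<le> det (cov_mat \<mu>)" using Kpos by simp
    then have "balanced \<mu> \<and> isotropic \<mu>" using main_bound(3)[OF muP] by (simp add: V_def)
    moreover have "prob_space \<mu>" using muP by (simp add: P_star_def)
    ultimately show "prob_space \<mu> \<and> balanced \<mu> \<and> isotropic \<mu>" by simp
  next
    assume R: "prob_space \<mu> \<and> balanced \<mu> \<and> isotropic \<mu>"
    then have muP: "\<mu> \<in> P_star" and dmu: "det (cov_mat \<mu>) = V"
      using bal_iso_props[OF _ assms(2)] by (auto simp: V_def)
    have "I_A2 \<mu> = ennreal (K * V)" using main_bound(1)[OF muP] dmu by (simp add: K_def add.commute)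
    then show "\<mu> \<in> P_star \<and> (\<forall>\<nu>::(real^'n) measure\<in>P_star. I_A2 \<nu> \<le> I_A2 \<mu>)"
      using muP upper by simp
  qed
qed

end
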